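(* Let $p,q\ge1$, $n=p+q$. For every $s\in\mathfrak{S}_{p,q}$, $\widetilde\alpha(Q_{p,q}(s))=T_s$ and $\widetilde\beta(T_s)=s$.
   Context: $\mathfrak{S}_n$ is generated by $s_i=(i,i+1)$; products are composed so that $(\sigma\tau)(x)=\tau(\sigma(x))$. $\mathfrak{S}_{p,q}$ is the set of $\sigma\in\mathfrak{S}_{p+q}$ with $\sigma^{-1}(1)<\cdots<\sigma^{-1}(p)$ and $\sigma^{-1}(p+1)<\cdots<\sigma^{-1}(p+q)$. Bubble decomposition: every $\sigma\in\mathfrak{S}_n$ factors uniquely as $\sigma=\sigma^{(n-1)}\cdots\sigma^{(1)}$ with $\sigma^{(k)}\in\{e,s_k,s_{k-1}s_k,\dots,s_1\cdots s_k\}$; $t_k(\sigma)=t$ if $\sigma^{(k)}=s_t\cdots s_k$, $t_k(\sigma)=0$ if $\sigma^{(k)}=e$, and $t_n(\sigma)=0$. $\operatorname{GVB}_n^+$ is the monoid generated by $\sigma_1,\dots,\sigma_{n-1},\xi_1,\dots,\xi_{n-1}$ subject to: for $|i-j|>1$, $\sigma_i\sigma_j=\sigma_j\sigma_i$, $\sigma_i\xi_j=\xi_j\sigma_i$, $\xi_i\xi_j=\xi_j\xi_i$; for $1\le i\le n-2$, $\sigma_i\sigma_{i+1}\sigma_i=\sigma_{i+1}\sigma_i\sigma_{i+1}$, $\xi_i\xi_{i+1}\xi_i=\xi_{i+1}\xi_i\xi_{i+1}$, $\xi_i\sigma_{i+1}\sigma_i=\sigma_{i+1}\sigma_i\xi_{i+1}$,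 $\xi_{i+1}\sigma_i\sigma_{i+1}=\sigma_i\sigma_{i+1}\xi_i$. $\mathfrak{B}_n^+$ is the positive braid monoid on $\sigma_1,\dots,\sigma_{n-1}$. $\widetilde\alpha:\mathbb{K}[\operatorname{GVB}_n^+]\to\mathbb{K}[\mathfrak{B}_n^+]$ is the algebra quotient by the ideal generated by all $\xi_i$ ($\sigma_i\mapsto\sigma_i$, $\xi_i\mapsto0$), and $\widetilde\beta:\mathbb{K}[\mathfrak{B}_n^+]\to\mathbb{K}[\mathfrak{S}_n]$ is the quotient by the ideal generated by all $\sigma_i^2-1$ ($\sigma_i\mapsto s_i$). Matsumoto–Tits section: for $s\in\mathfrak{S}_n$ with reduced expression $s=s_{i_1}\cdots s_{i_l}$, $T_s=\sigma_{i_1}\cdots\sigma_{i_l}\in\mathfrak{B}_n^+$ (independent of the reduced expression). For $s\in\mathfrak{S}_{p,q}$ with $t_k=t_k(s)$, $$Q_{p,q}(s)=\prod_{k=n-1,\dots,1;\ s^{(k)}\neq e}\big(\sigma_{t_k}+(1-\delta_{t_k+1,t_{k+1}})\sigma_1\cdots\sigma_{t_k-1}\xi_{t_k}\big)\sigma_{t_k+1}\cdots\sigma_k\in\mathbb{K}[\operatorname{GVB}_n^+],$$ factors ordered with $k$ decreasing from left to right, $\delta$ the Kronecker delta, empty products equal to $e$. *)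

theory Defs
  imports "HOL-Combinatorics.Permutations"
begin

text \<open>Words in the generators sigma_i (Sig i) and xi_i (Xi i).  Words over Sig only are
  words in the positive braid monoid generators.\<close>

datatype gen = Sig nat | Xi nat

fun is_Sig :: "gen \<Rightarrow> bool" where
  "is_Sig (Sig _) = True" | "is_Sig (Xi _) = False"

fun gidx :: "gen \<Rightarrow> nat" where
  "gidx (Sig i) = i" | "gidx (Xi i) = i"

inductive gvb_rel :: "nat \<Rightarrow> gen list \<Rightarrow> gen list \<Rightarrow> bool" for n where
  ss: "\<lbrakk>1 \<le> i; i < n; 1 \<le> j; j < n; i + 1 < j \<or> j + 1 < i\<rbrakk> \<Longrightarrow> gvb_rel n [Sig i, Sig j] [Sig j, Sig i]"
| sx: "\<lbrakk>1 \<le> i; i < n; 1 \<le> j; j < n; i + 1 < j \<or> j + 1 < i\<rbrakk> \<Longrightarrow> gvb_rel n [Sig i, Xi j] [Xi j, Sig i]"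
| xx: "\<lbrakk>1 \<le> i; i < n; 1 \<le> j; j < n; i + 1 < j \<or> j + 1 < i\<rbrakk> \<Longrightarrow> gvb_rel n [Xi i, Xi j] [Xi j, Xi i]"
| sss: "\<lbrakk>1 \<le> i; i + 2 \<le> n\<rbrakk> \<Longrightarrow> gvb_rel n [Sig i, Sig (i+1), Sig i] [Sig (i+1), Sig i, Sig (i+1)]"
| xxx: "\<lbrakk>1 \<le> i; i + 2 \<le> n\<rbrakk> \<Longrightarrow> gvb_rel n [Xi i, Xi (i+1), Xi i] [Xi (i+1), Xi i, Xi (i+1)]"
| xss: "\<lbrakk>1 \<le> i; i + 2 \<le> n\<rbrakk> \<Longrightarrow> gvb_rel n [Xi i, Sig (i+1), Sig i] [Sig (i+1), Sig i, Xi (i+1)]"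
| xss': "\<lbrakk>1 \<le> i; i + 2 \<le> n\<rbrakk> \<Longrightarrow> gvb_rel n [Xi (i+1), Sig i, Sig (i+1)] [Sig i, Sig (i+1), Xi i]"

inductive braid_rel :: "nat \<Rightarrow> gen list \<Rightarrow> gen list \<Rightarrow> bool" for n where
  ss: "\<lbrakk>1 \<le> i; i < n; 1 \<le> j; j < n; i + 1 < j \<or> j + 1 < i\<rbrakk> \<Longrightarrow> braid_rel n [Sig i, Sig j] [Sig j, Sig i]"
| sss: "\<lbrakk>1 \<le> i; i + 2 \<le> n\<rbrakk> \<Longrightarrow> braid_rel n [Sig i, Sig (i+1), Sig i] [Sig (i+1), Sig i, Sig (i+1)]"

definition ctx_step :: "('a list \<Rightarrow> 'a list \<Rightarrow> bool) \<Rightarrow> 'a list \<Rightarrow> 'a list \<Rightarrow> bool" where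
  "ctx_step R u v \<longleftrightarrow> (\<exists>a b l r. R l r \<and> u = a @ l @ b \<and> v = a @ r @ b)"

definition mon_cong :: "('a list \<Rightarrow> 'a list \<Rightarrow> bool) \<Rightarrow> 'a list \<Rightarrow> 'a list \<Rightarrow> bool" where
  "mon_cong R = (\<lambda>u v. ctx_step R u v \<or> ctx_step R v u)\<^sup>*\<^sup>*"

text \<open>An element of the monoid algebra K[M] is represented by a formal K-linear combination
  (list of coefficient/representative pairs) of representatives of elements of M; two such
  combinations denote the same element of K[M] iff, for every element of M (equivalence class
  of representatives under E), the total coefficients agree.\<close>

type_synonym ('k, 'a) fsum = "('k \<times> 'a) list"

definition fs_eq :: "('a \<Rightarrow> 'a \<Rightarrow> bool) \<Rightarrow> ('k::comm_ring_1, 'a) fsum \<Rightarrow> ('k, 'a) fsum \<Rightarrow> bool" where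
  "fs_eq E x y \<longleftrightarrow> (\<forall>w. sum_list [c. (c, v) \<leftarrow> x, E v w] = sum_list [c. (c, v) \<leftarrow> y, E v w])"

definition fs_mult :: "('k::comm_ring_1, 'a list) fsum \<Rightarrow> ('k, 'a list) fsum \<Rightarrow> ('k, 'a list) fsum" where
  "fs_mult x y = [(c * d, v @ w). (c, v) \<leftarrow> x, (d, w) \<leftarrow> y]"

definition fs_prod :: "('k::comm_ring_1, 'a list) fsum list \<Rightarrow> ('k, 'a list) fsum" where
  "fs_prod xs = foldr fs_mult xs [(1, [])]"

definition sw :: "nat \<Rightarrow> nat \<Rightarrow> nat" where
  "sw i = (\<lambda>x. if x = i then i + 1 else if x = i + 1 then i else x)"

text \<open>Product s_{i1} ... s_{il} with the convention (sigma tau)(x) = tau(sigma(x)).\<close>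
fun perm_of :: "nat list \<Rightarrow> nat \<Rightarrow> nat" where
  "perm_of [] = id"
| "perm_of (i # w) = perm_of w \<circ> sw i"

definition Sym :: "nat \<Rightarrow> (nat \<Rightarrow> nat) set" where
  "Sym n = {\<sigma>. \<sigma> permutes {1..n}}"

definition shuffles :: "nat \<Rightarrow> nat \<Rightarrow> (nat \<Rightarrow> nat) set" where
  "shuffles p q = {\<sigma> \<in> Sym (p + q).
      (\<forall>i j. 1 \<le> i \<and> i < j \<and> j \<le> p \<longrightarrow> inv \<sigma> i < inv \<sigma> j) \<and>
      (\<forall>i j. p + 1 \<le> i \<and> i < j \<and> j \<le> p + q \<longrightarrow> inv \<sigma> i < inv \<sigma> j)}"

definition bubble_word :: "nat \<Rightarrow> nat \<Rightarrow> nat list" where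
  "bubble_word k t = (if t = 0 then [] else [t..<k+1])"

definition bubble_t :: "nat \<Rightarrow> (nat \<Rightarrow> nat) \<Rightarrow> nat \<Rightarrow> nat" where
  "bubble_t n \<sigma> = (THE t. (\<forall>k. (k \<in> {1..n-1} \<longrightarrow> t k \<le> k) \<and> (k \<notin> {1..n-1} \<longrightarrow> t k = 0)) \<and>
       \<sigma> = perm_of (concat (map (\<lambda>k. bubble_word k (t k)) (rev [1..<n]))))"

definition Sigs :: "nat list \<Rightarrow> gen list" where
  "Sigs w = map Sig w"

definition Q_factor :: "nat \<Rightarrow> nat \<Rightarrow> nat \<Rightarrow> ('k::comm_ring_1, gen list) fsum" where
  "Q_factor k t t' =
     fs_mult [(1, [Sig t]), (1 - (if t + 1 = t' then 1 else 0), Sigs [1..<t] @ [Xi t])]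
             [(1, Sigs [t+1..<k+1])]"

definition Q :: "nat \<Rightarrow> nat \<Rightarrow> (nat \<Rightarrow> nat) \<Rightarrow> ('k::comm_ring_1, gen list) fsum" where
  "Q p q s = (let n = p + q; t = bubble_t n s in
     fs_prod [Q_factor k (t k) (t (k+1)). k \<leftarrow> rev [1..<n], t k \<noteq> 0])"

text \<open>alpha~ : sigma_i -> sigma_i, xi_i -> 0, extended multiplicatively and linearly.\<close>
definition alpha_t :: "('k::comm_ring_1, gen list) fsum \<Rightarrow> ('k, gen list) fsum" where
  "alpha_t x = [(c, v). (c, v) \<leftarrow> x, list_all is_Sig v]"

definition beta_t :: "('k::comm_ring_1, gen list) fsum \<Rightarrow> ('k, nat \<Rightarrow> nat) fsum" where
  "beta_t x = [(c, perm_of (map gidx v)). (c, v) \<leftarrow> x]"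

definition reduced_expr :: "nat \<Rightarrow> (nat \<Rightarrow> nat) \<Rightarrow> nat list \<Rightarrow> bool" where
  "reduced_expr n s w \<longleftrightarrow> set w \<subseteq> {1..n-1} \<and> perm_of w = s \<and>
     (\<forall>w'. set w' \<subseteq> {1..n-1} \<and> perm_of w' = s \<longrightarrow> length w \<le> length w')"

definition T :: "nat \<Rightarrow> (nat \<Rightarrow> nat) \<Rightarrow> ('k::comm_ring_1, gen list) fsum" where
  "T n s = [(1, Sigs (SOME w. reduced_expr n s w))]"

end

theory Submission
  imports Defs
begin


lemma sw_sw[simp]: "sw i (sw i x) = x" by (simp add: sw_def)
lemma sw_o_sw[simp]: "sw i \<circ> sw i = id" by (simp add: fun_eq_iff)
lemma sw_transpose: "sw i = Transposition.transpose i (i+1)"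
  by (simp add: fun_eq_iff sw_def transpose_def)
lemma bij_sw: "bij (sw i)" by (metis bij_betw_imageI inj_on_inverseI sw_sw surj_def)

lemma perm_of_append: "perm_of (xs @ ys) = perm_of ys \<circ> perm_of xs"
  by (induction xs) auto

lemma bij_perm_of: "bij (perm_of w)"
proof (induction w)
  case Nil show ?case by (simp only: perm_of.simps bij_id)
next
  case (Cons a w) show ?case unfolding perm_of.simps by (rule bij_comp[OF bij_sw Cons])
qed

lemma perm_of_rev_cancel: "perm_of (rev w) \<circ> perm_of w = id"
proof (induction w)
  case (Cons a w)
  have "perm_of (rev (a#w)) \<circ> perm_of (a#w) = sw a \<circ> (perm_of (rev w) \<circ> perm_of w) \<circ> sw a"
    by (simp add: perm_of_append comp_assoc)
  also have "\<dots> = id" using Cons by (simp only: o_id sw_o_sw)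
  finally show ?case .
qed simp

lemma perm_of_permutes: "set w \<subseteq> {1..n-1} \<Longrightarrow> perm_of w permutes {1..n}"
proof (induction w)
  case Nil then show ?case by (simp only: perm_of.simps permutes_id)
next
  case (Cons a w)
  then have "sw a permutes {1..n}" unfolding sw_transpose
    by (intro permutes_swap_id) auto
  moreover have "perm_of w permutes {1..n}" using Cons by auto
  ultimately show ?case by (simp only: perm_of.simps permutes_compose)
qed

lemma perm_of_fix: "(\<forall>l\<in>set w. l \<noteq> x \<and> l + 1 \<noteq> x) \<Longrightarrow> perm_of w x = x"
  by (induction w) (auto simp: sw_def)

lemma perm_of_upt: "a \<le> b + 1 \<Longrightarrow> perm_of [a..<b+1] a = b + 1"
proof (induction "b + 1 - a" arbitrary: a)
  case 0 then show ?case by simp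
next
  case (Suc d)
  then have "a < b + 1" by linarith
  then have "[a..<b+1] = a # [a+1..<b+1]" by (simp only: upt_conv_Cons Suc_eq_plus1)
  moreover have "perm_of [a+1..<b+1] (a+1) = b+1" using Suc.hyps(1)[of "a+1"] Suc.hyps(2) by (simp del: upt.simps)
  ultimately show ?case by (simp del: upt.simps add: sw_def)
qed



definition invs :: "nat \<Rightarrow> (nat \<Rightarrow> nat) \<Rightarrow> (nat \<times> nat) set" where
  "invs n g = {(x,y). 1 \<le> x \<and> x < y \<and> y \<le> n \<and> g y < g x}"

definition ninv :: "nat \<Rightarrow> (nat \<Rightarrow> nat) \<Rightarrow> nat" where
  "ninv n g = card (invs n g)"

lemma invs_id: "invs n (\<lambda>x. x) = {}" by (auto simp: invs_def)
lemma invs_id': "invs n id = {}" by (auto simp: invs_def)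

lemma finite_invs: "finite (invs n g)"
  by (rule finite_subset[of _ "{1..n} \<times> {1..n}"]) (auto simp: invs_def)

lemma invs_sw_image:
  assumes "1 \<le> i" "i < n"
  shows "invs n (h \<circ> sw i) - {(i,i+1)} = (\<lambda>(x,y). (sw i x, sw i y)) ` (invs n h - {(i,i+1)})"
proof
  show "invs n (h \<circ> sw i) - {(i,i+1)} \<subseteq> (\<lambda>(x,y). (sw i x, sw i y)) ` (invs n h - {(i,i+1)})"
  proof
    fix z assume z: "z \<in> invs n (h \<circ> sw i) - {(i,i+1)}"
    obtain x y where xy: "z = (x,y)" by force
    have "(sw i x, sw i y) \<in> invs n h - {(i,i+1)}"
      using z assms unfolding xy invs_def by (auto simp: sw_def split: if_splits)
    moreover have "z = (\<lambda>(x,y). (sw i x, sw i y)) (sw i x, sw i y)" using xy by simp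
    ultimately show "z \<in> (\<lambda>(x,y). (sw i x, sw i y)) ` (invs n h - {(i,i+1)})" by blast
  qed
next
  show "(\<lambda>(x,y). (sw i x, sw i y)) ` (invs n h - {(i,i+1)}) \<subseteq> invs n (h \<circ> sw i) - {(i,i+1)}"
    using assms unfolding invs_def by (auto simp: sw_def split: if_splits)
qed

lemma card_invs_minus:
  assumes "1 \<le> i" "i < n"
  shows "card (invs n (h \<circ> sw i) - {(i,i+1)}) = card (invs n h - {(i,i+1)})"
proof -
  have "inj (\<lambda>(x,y). (sw i x, sw i y))"
    by (rule injI) (auto, metis sw_sw, metis sw_sw)
  then show ?thesis unfolding invs_sw_image[OF assms]
    by (simp add: card_image inj_on_subset)
qed

lemma ninv_sw_up:
  assumes "1 \<le> i" "i < n" "h i < h (i+1)"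
  shows "ninv n (h \<circ> sw i) = Suc (ninv n h)"
proof -
  have a: "(i,i+1) \<in> invs n (h \<circ> sw i)" using assms by (simp add: invs_def sw_def)
  have b: "(i,i+1) \<notin> invs n h" using assms by (simp add: invs_def)
  have "card (invs n (h \<circ> sw i)) = Suc (card (invs n (h \<circ> sw i) - {(i,i+1)}))"
    using a finite_invs by (metis card_Suc_Diff1)
  also have "\<dots> = Suc (card (invs n h))" using card_invs_minus[OF assms(1,2)] b by simp
  finally show ?thesis by (simp add: ninv_def)
qed

lemma ninv_sw_down:
  assumes "1 \<le> i" "i < n" "h (i+1) < h i"
  shows "Suc (ninv n (h \<circ> sw i)) = ninv n h"
proof -
  have a: "(i,i+1) \<notin> invs n (h \<circ> sw i)" using assms by (simp add: invs_def sw_def)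
  have b: "(i,i+1) \<in> invs n h" using assms by (simp add: invs_def)
  have "card (invs n h) = Suc (card (invs n h - {(i,i+1)}))"
    using b finite_invs by (metis card_Suc_Diff1)
  also have "\<dots> = Suc (card (invs n (h \<circ> sw i)))" using card_invs_minus[OF assms(1,2), of h] a by simp
  finally show ?thesis by (simp add: ninv_def)
qed

lemma perm_of_neq:
  assumes "set w \<subseteq> {1..n-1}" "1 \<le> i" "i < n"
  shows "perm_of w i \<noteq> perm_of w (i+1)"
  using permutes_inj[OF perm_of_permutes[OF assms(1)]] by (metis injD n_not_Suc_n Suc_eq_plus1)

lemma ninv_le_length: "set w \<subseteq> {1..n-1} \<Longrightarrow> ninv n (perm_of w) \<le> length w"
proof (induction w)
  case Nil
  show ?case unfolding ninv_def perm_of.simps invs_id' by simp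
next
  case (Cons a w)
  then have a: "1 \<le> a" "a < n" and w: "set w \<subseteq> {1..n-1}" by auto
  have "perm_of w a \<noteq> perm_of w (a+1)" using perm_of_neq[OF w a] .
  then consider "perm_of w a < perm_of w (a+1)" | "perm_of w (a+1) < perm_of w a" by linarith
  then show ?case
  proof cases
    case 1
    have "ninv n (perm_of (a#w)) = Suc (ninv n (perm_of w))" using ninv_sw_up[OF a 1] by (simp only: perm_of.simps)
    then show ?thesis using Cons.IH[OF w] unfolding length_Cons by linarith
  next
    case 2
    have "Suc (ninv n (perm_of (a#w))) = ninv n (perm_of w)" using ninv_sw_down[OF a 2] by (simp only: perm_of.simps)
    then show ?thesis using Cons.IH[OF w] unfolding length_Cons by linarith
  qed
qed

definition red :: "nat \<Rightarrow> nat list \<Rightarrow> bool" where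
  "red n w \<longleftrightarrow> set w \<subseteq> {1..n-1} \<and> length w = ninv n (perm_of w)"

lemma red_cons:
  assumes "red n v" "1 \<le> a" "a < n" "perm_of v a < perm_of v (a+1)"
  shows "red n (a # v)"
  using assms ninv_sw_up[OF assms(2,3,4)] by (auto simp: red_def)

lemma red_uncons:
  assumes "red n (a # u)"
  shows "red n u \<and> 1 \<le> a \<and> a < n \<and> perm_of u a < perm_of u (a+1)"
proof -
  have a: "1 \<le> a" "a < n" and w: "set u \<subseteq> {1..n-1}" using assms by (auto simp: red_def)
  have len: "Suc (length u) = ninv n (perm_of u \<circ> sw a)" using assms by (simp add: red_def)
  have le: "ninv n (perm_of u) \<le> length u" using ninv_le_length[OF w] .
  have "perm_of u a \<noteq> perm_of u (a+1)" using perm_of_neq[OF w a] .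
  then consider "perm_of u a < perm_of u (a+1)" | "perm_of u (a+1) < perm_of u a" by linarith
  then show ?thesis
  proof cases
    case 1 then show ?thesis using ninv_sw_up[OF a 1] len w a by (simp add: red_def)
  next
    case 2 then show ?thesis using ninv_sw_down[OF a 2] len le by simp
  qed
qed

lemma red_Nil: "red n []" by (simp add: red_def ninv_def invs_id')



definition Wd :: "nat \<Rightarrow> (nat \<Rightarrow> nat) \<Rightarrow> nat list" where
  "Wd n t = concat (map (\<lambda>k. bubble_word k (t k)) (rev [1..<n]))"

definition supp :: "nat \<Rightarrow> (nat \<Rightarrow> nat) \<Rightarrow> bool" where
  "supp n t \<longleftrightarrow> (\<forall>k. (k \<in> {1..n-1} \<longrightarrow> t k \<le> k) \<and> (k \<notin> {1..n-1} \<longrightarrow> t k = 0))"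

lemma W_Suc: "1 \<le> m \<Longrightarrow> Wd (Suc m) t = bubble_word m (t m) @ Wd m t"
  by (simp add: Wd_def)

lemma W_cong: "(\<And>k. k < m \<Longrightarrow> t k = t' k) \<Longrightarrow> Wd m t = Wd m t'"
  unfolding Wd_def by (intro arg_cong[where f=concat] map_cong) auto

lemma W_small: "m \<le> 1 \<Longrightarrow> Wd m t = []"
  by (simp add: Wd_def)

lemma set_W: "supp n t \<Longrightarrow> set (Wd n t) \<subseteq> {1..n-1}"
  unfolding Wd_def supp_def bubble_word_def
  by (auto split: if_splits)

lemma supp_restrict: "supp (Suc m) t \<Longrightarrow> supp m (t(m:=0))"
  unfolding supp_def by auto

lemma supp_extend: "supp m t' \<Longrightarrow> x \<le> m \<Longrightarrow> 1 \<le> m \<Longrightarrow> supp (Suc m) (t'(m:=x))"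
  unfolding supp_def by auto

lemma supp_small: "n \<le> 1 \<Longrightarrow> supp n t \<longleftrightarrow> t = (\<lambda>_. 0)"
  unfolding supp_def by auto

lemma perm_of_rev_cancel2: "perm_of w \<circ> perm_of (rev w) = id"
  using perm_of_rev_cancel[of "rev w"] by simp

lemma bubble_exists: "s permutes {1..n} \<Longrightarrow> \<exists>t. supp n t \<and> s = perm_of (Wd n t)"
proof (induction n arbitrary: s)
  case 0
  then have "s = id" by simp
  then show ?case by (intro exI[of _ "\<lambda>_. 0"]) (simp add: supp_small W_small)
next
  case (Suc m)
  show ?case
  proof (cases "m = 0")
    case True
    then have "s = id" using Suc.prems by simp
    then show ?thesis using True by (intro exI[of _ "\<lambda>_. 0"]) (simp add: supp_small W_small)
  next
    case False
    then have m1: "1 \<le> m" by simp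
    define x where "x = inv s (Suc m)"
    have sx: "s x = Suc m" unfolding x_def using permutes_inverses(1)[OF Suc.prems] .
    have xr: "x \<in> {1..Suc m}" unfolding x_def
      using permutes_in_image[OF permutes_inv[OF Suc.prems]] by simp
    show ?thesis
    proof (cases "x = Suc m")
      case True
      have "s permutes {1..m}"
        by (rule permutes_superset[OF Suc.prems]) (use sx True in \<open>auto simp: le_Suc_eq\<close>)
      then obtain t' where t': "supp m t'" "s = perm_of (Wd m t')" using Suc.IH by blast
      have "Wd (Suc m) (t'(m:=0)) = Wd m t'"
        using W_Suc[OF m1, of "t'(m:=0)"] W_cong[of m "t'(m:=0)" t'] by (simp add: bubble_word_def)
      then have "s = perm_of (Wd (Suc m) (t'(m:=0)))" using t'(2) by simp
      then show ?thesis using supp_extend[OF t'(1) _ m1, of 0] by blast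
    next
      case False
      then have xm: "1 \<le> x" "x \<le> m" using xr by auto
      define c where "c = perm_of [x..<m+1]"
      define ci where "ci = perm_of (rev [x..<m+1])"
      have cic: "ci \<circ> c = id" unfolding c_def ci_def by (rule perm_of_rev_cancel)
      have cx: "c x = m + 1" unfolding c_def using xm by (intro perm_of_upt) simp
      have cim: "ci (Suc m) = x" using fun_cong[OF cic, of x] cx by simp
      have cip: "ci permutes {1..Suc m}" unfolding ci_def using xm by (intro perm_of_permutes) auto
      define s' where "s' = s \<circ> ci"
      have s'p: "s' permutes {1..Suc m}" unfolding s'_def using cip Suc.prems by (rule permutes_compose)
      have "s' permutes {1..m}"
        by (rule permutes_superset[OF s'p]) (use sx cim in \<open>auto simp: s'_def le_Suc_eq\<close>)
      then obtain t' where t': "supp m t'" "s' = perm_of (Wd m t')" using Suc.IH by blast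
      have "Wd (Suc m) (t'(m:=x)) = [x..<m+1] @ Wd m t'"
        using W_Suc[OF m1, of "t'(m:=x)"] W_cong[of m "t'(m:=x)" t'] xm by (simp add: bubble_word_def)
      then have "perm_of (Wd (Suc m) (t'(m:=x))) = s' \<circ> c" by (simp add: perm_of_append c_def t'(2))
      also have "\<dots> = s" unfolding s'_def by (simp add: comp_assoc cic)
      finally show ?thesis using supp_extend[OF t'(1) xm(2) m1] by metis
    qed
  qed
qed

lemma W_fix: assumes "supp m t" shows "perm_of (Wd m t) (Suc m) = Suc m"
proof (intro perm_of_fix ballI)
  fix l assume "l \<in> set (Wd m t)"
  then have "l \<in> {1..m-1}" using set_W[OF assms] by blast
  then show "l \<noteq> Suc m \<and> l + 1 \<noteq> Suc m" by auto
qed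

lemma bubble_unique: "supp n t \<Longrightarrow> supp n t' \<Longrightarrow> perm_of (Wd n t) = perm_of (Wd n t') \<Longrightarrow> t = t'"
proof (induction n arbitrary: t t')
  case 0 then show ?case by (simp add: supp_small)
next
  case (Suc m)
  show ?case
  proof (cases "m = 0")
    case True then show ?thesis using Suc.prems by (simp add: supp_small)
  next
    case False
    then have m1: "1 \<le> m" by simp
    define pos where "pos a = (if a = 0 then Suc m else a)" for a :: nat
    have key: "perm_of (Wd (Suc m) r) (pos (r m)) = Suc m \<and> Wd (Suc m) r = bubble_word m (r m) @ Wd m (r(m:=0))"
      if r: "supp (Suc m) r" for r
    proof -
      have wr: "Wd (Suc m) r = bubble_word m (r m) @ Wd m (r(m:=0))"
        using W_Suc[OF m1, of r] W_cong[of m r "r(m:=0)"] by simp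
      have fx: "perm_of (Wd m (r(m:=0))) (Suc m) = Suc m" using W_fix[OF supp_restrict[OF r]] .
      have "r m \<le> m" using r m1 unfolding supp_def by auto
      then have "perm_of (bubble_word m (r m)) (pos (r m)) = Suc m"
        unfolding bubble_word_def pos_def using perm_of_upt[of "r m" m] by auto
      then show ?thesis using wr fx by (simp add: perm_of_append)
    qed
    have tm: "t m \<le> m" "t' m \<le> m" using Suc.prems m1 unfolding supp_def by auto
    have inj: "inj (perm_of (Wd (Suc m) t))" using bij_perm_of bij_is_inj by blast
    have A: "perm_of (Wd (Suc m) t) (pos (t m)) = Suc m" using key[OF Suc.prems(1)] by blast
    have B: "perm_of (Wd (Suc m) t) (pos (t' m)) = Suc m" unfolding Suc.prems(3) using key[OF Suc.prems(2)] by blast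
    have "perm_of (Wd (Suc m) t) (pos (t m)) = perm_of (Wd (Suc m) t) (pos (t' m))"
      using A B by simp
    then have "pos (t m) = pos (t' m)" using inj by (meson injD)
    then have eqm: "t m = t' m" using tm unfolding pos_def by (auto split: if_splits)
    define c where "c = perm_of (bubble_word m (t m))"
    have W1: "Wd (Suc m) t = bubble_word m (t m) @ Wd m (t(m:=0))" using key[OF Suc.prems(1)] by blast
    have W2: "Wd (Suc m) t' = bubble_word m (t m) @ Wd m (t'(m:=0))" using key[OF Suc.prems(2)] eqm by simp
    have "perm_of (Wd m (t(m:=0))) \<circ> c = perm_of (Wd m (t'(m:=0))) \<circ> c"
      using Suc.prems(3) unfolding W1 W2 perm_of_append c_def .
    then have "perm_of (Wd m (t(m:=0))) \<circ> c \<circ> perm_of (rev (bubble_word m (t m)))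
             = perm_of (Wd m (t'(m:=0))) \<circ> c \<circ> perm_of (rev (bubble_word m (t m)))" by simp
    then have "perm_of (Wd m (t(m:=0))) = perm_of (Wd m (t'(m:=0)))"
      unfolding c_def comp_assoc perm_of_rev_cancel2 by simp
    then have "t(m:=0) = t'(m:=0)"
      using Suc.IH supp_restrict[OF Suc.prems(1)] supp_restrict[OF Suc.prems(2)] by blast
    then show ?thesis using eqm by (metis fun_upd_triv fun_upd_upd)
  qed
qed

lemma invs_Suc: assumes g: "g permutes {1..m}" shows "invs (Suc m) g = invs m g"
proof -
  have gs: "g (Suc m) = Suc m" using g by (intro permutes_not_in) auto
  have bd: "\<And>x. x \<in> {1..m} \<Longrightarrow> g x \<le> m" using permutes_in_image[OF g] by auto
  have key: "y \<le> m" if h: "1 \<le> x" "x < y" "y \<le> Suc m" "g y < g x" for x y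
  proof (rule ccontr)
    assume "\<not> y \<le> m"
    then have y: "y = Suc m" using h by simp
    then have "g x \<le> m" using bd h by auto
    then show False using h y gs by simp
  qed
  show ?thesis unfolding invs_def
  proof (intro set_eqI iffI)
    fix z assume "z \<in> {(x, y). 1 \<le> x \<and> x < y \<and> y \<le> Suc m \<and> g y < g x}"
    then show "z \<in> {(x, y). 1 \<le> x \<and> x < y \<and> y \<le> m \<and> g y < g x}" using key by blast
  next
    fix z assume "z \<in> {(x, y). 1 \<le> x \<and> x < y \<and> y \<le> m \<and> g y < g x}"
    then show "z \<in> {(x, y). 1 \<le> x \<and> x < y \<and> y \<le> Suc m \<and> g y < g x}" by auto
  qed
qed

lemma red_chain:
  assumes ru: "red (Suc m) u" and gp: "perm_of u permutes {1..m}"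
  shows "1 \<le> j \<Longrightarrow> j \<le> Suc m \<Longrightarrow> red (Suc m) ([j..<m+1] @ u)"
proof (induction "Suc m - j" arbitrary: j)
  case 0 then show ?case using ru by simp
next
  case (Suc d)
  then have jm: "j < m + 1" by linarith
  then have eq: "[j..<m+1] = j # [j+1..<m+1]" by (simp only: upt_conv_Cons Suc_eq_plus1)
  have r: "red (Suc m) ([j+1..<m+1] @ u)" using Suc.hyps(1)[of "j+1"] Suc.hyps(2) Suc.prems by simp
  have f1: "perm_of [j+1..<m+1] j = j" by (intro perm_of_fix) auto
  have f2: "perm_of [j+1..<m+1] (j+1) = m+1" using jm by (intro perm_of_upt) simp
  have g1: "perm_of u (m+1) = m+1" using gp by (intro permutes_not_in) auto
  have g2: "perm_of u j \<le> m" using permutes_in_image[OF gp, of j] Suc.prems jm by auto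
  have "red (Suc m) (j # [j+1..<m+1] @ u)"
    using Suc.prems jm f1 f2 g1 g2 by (intro red_cons[OF r]) (auto simp: perm_of_append)
  then show ?case using eq by simp
qed

lemma red_W: "supp n t \<Longrightarrow> red n (Wd n t)"
proof (induction n arbitrary: t)
  case 0 then show ?case by (simp add: W_small red_Nil)
next
  case (Suc m)
  show ?case
  proof (cases "m = 0")
    case True then show ?thesis by (simp add: W_small red_Nil)
  next
    case False
    then have m1: "1 \<le> m" by simp
    define u where "u = Wd m (t(m:=0))"
    have sr: "supp m (t(m:=0))" using supp_restrict[OF Suc.prems] .
    have rm: "red m u" unfolding u_def using Suc.IH[OF sr] .
    have su: "set u \<subseteq> {1..m-1}" unfolding u_def using set_W[OF sr] .
    have gp: "perm_of u permutes {1..m}" using perm_of_permutes[OF su] .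
    have su': "set u \<subseteq> {1..Suc m-1}" using su by (auto simp: subset_iff)
    have ru: "red (Suc m) u" using rm su' invs_Suc[OF gp] unfolding red_def ninv_def by simp
    have wr: "Wd (Suc m) t = bubble_word m (t m) @ u"
      unfolding u_def using W_Suc[OF m1, of t] W_cong[of m t "t(m:=0)"] by simp
    have "t m \<le> m" using Suc.prems m1 unfolding supp_def by auto
    then show ?thesis using wr ru red_chain[OF ru gp, of "t m"] by (auto simp: bubble_word_def)
  qed
qed

lemma red_exists: "g permutes {1..n} \<Longrightarrow> \<exists>v. red n v \<and> perm_of v = g"
  using bubble_exists red_W by metis




lemma mc_refl: "mon_cong R u u" by (simp add: mon_cong_def)
lemma mc_sym: "mon_cong R u v \<Longrightarrow> mon_cong R v u"
  unfolding mon_cong_def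
  by (rule sympD[OF symp_rtranclp]) (auto simp: symp_def)
lemma mc_trans [trans]: "mon_cong R u v \<Longrightarrow> mon_cong R v w \<Longrightarrow> mon_cong R u w"
  unfolding mon_cong_def by (rule rtranclp_trans)
lemma ctx_step_prefix: "ctx_step R u v \<Longrightarrow> ctx_step R (x @ u) (x @ v)"
  unfolding ctx_step_def by (metis append.assoc)
lemma mc_prefix: "mon_cong R u v \<Longrightarrow> mon_cong R (x @ u) (x @ v)"
  unfolding mon_cong_def
proof (induction rule: rtranclp_induct)
  case base then show ?case by simp
next
  case (step y z)
  then have "ctx_step R (x @ y) (x @ z) \<or> ctx_step R (x @ z) (x @ y)" using ctx_step_prefix by blast
  with step.IH show ?case by (simp add: rtranclp.rtrancl_into_rtrancl)
qed
lemma mc_Cons: "mon_cong R u v \<Longrightarrow> mon_cong R (c # u) (c # v)"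
  using mc_prefix[of R u v "[c]"] by simp
lemma mc_base: "R l r \<Longrightarrow> mon_cong R (l @ y) (r @ y)"
  unfolding mon_cong_def ctx_step_def
  by (rule r_into_rtranclp) (metis append_Nil)

lemma sw_comm: "a + 1 < b \<or> b + 1 < a \<Longrightarrow> sw a (sw b x) = sw b (sw a x)"
  by (auto simp: sw_def)
lemma sw_braid: "sw a (sw (a+1) (sw a x)) = sw (a+1) (sw a (sw (a+1) x))"
  by (auto simp: sw_def)

lemma sw_braid5: "sw a (sw (Suc a) (sw a (sw (Suc a) (sw a x)))) = sw (Suc a) x"
  by (auto simp: sw_def)

lemma perm_of_Cons_apply: "perm_of (a # u) x = perm_of u (sw a x)" by simp

lemma red_len_eq: "red n w \<Longrightarrow> red n w' \<Longrightarrow> perm_of w = perm_of w' \<Longrightarrow> length w = length w'"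
  by (simp add: red_def)

lemma red_perm: "red n w \<Longrightarrow> perm_of w permutes {1..n}"
  unfolding red_def using perm_of_permutes by blast

definition IHM :: "nat \<Rightarrow> nat \<Rightarrow> bool" where
  "IHM n L \<longleftrightarrow> (\<forall>v v'. length v < L \<longrightarrow> red n v \<longrightarrow> red n v' \<longrightarrow> perm_of v = perm_of v' \<longrightarrow>
      mon_cong (braid_rel n) (Sigs v) (Sigs v'))"

lemma mats_far:
  assumes IH: "IHM n (length (a # u))" and r: "red n (a # u)" and r': "red n (b # u')"
    and eq: "perm_of (a # u) = perm_of (b # u')" and far: "a + 1 < b \<or> b + 1 < a"
  shows "mon_cong (braid_rel n) (Sigs (a # u)) (Sigs (b # u'))"
proof -
  define g where "g = perm_of (a # u)"
  have hu: "\<And>x. perm_of u x = g (sw a x)" by (simp add: g_def)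
  have hu': "\<And>x. perm_of u' x = g (sw b x)" unfolding g_def eq by simp
  obtain ru: "red n u" and a: "1 \<le> a" "a < n" and asc: "perm_of u a < perm_of u (a+1)" using red_uncons[OF r] by blast
  obtain ru': "red n u'" and b: "1 \<le> b" "b < n" and asc': "perm_of u' b < perm_of u' (b+1)" using red_uncons[OF r'] by blast
  have ga: "g (a+1) < g a" using asc hu by (simp add: sw_def)
  have gb: "g (b+1) < g b" using asc' hu' by (simp add: sw_def)
  have "perm_of (b # u) permutes {1..n}" using r b by (intro perm_of_permutes) (auto simp: red_def)
  then obtain v where rv: "red n v" and pv: "perm_of v = perm_of (b # u)" using red_exists by blast
  have kv: "\<And>x. perm_of v x = g (sw a (sw b x))" using pv hu by simp
  have rbv: "red n (b # v)" using far ga gb by (intro red_cons[OF rv b]) (auto simp: kv sw_def)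
  have rav: "red n (a # v)" using far ga gb by (intro red_cons[OF rv a]) (auto simp: kv sw_def)
  have pbv: "perm_of (b # v) = perm_of u" by (rule ext) (simp add: kv hu)
  have pav: "perm_of (a # v) = perm_of u'" by (rule ext) (simp add: kv hu' sw_comm[OF far])
  have lu: "length u' = length u" using red_len_eq[OF r r' eq] by simp
  have c1: "mon_cong (braid_rel n) (Sigs u) (Sigs (b # v))"
    using IH ru rbv pbv by (simp add: IHM_def)
  have c2: "mon_cong (braid_rel n) (Sigs u') (Sigs (a # v))"
    using IH ru' rav pav lu by (simp add: IHM_def)
  have rel: "braid_rel n [Sig a, Sig b] [Sig b, Sig a]" using a b far by (intro braid_rel.ss) auto
  have "mon_cong (braid_rel n) (Sigs (a # u)) (Sig a # Sigs (b # v))"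
    using mc_Cons[OF c1] by (simp add: Sigs_def)
  also have "mon_cong (braid_rel n) (Sig a # Sigs (b # v)) (Sig b # Sigs (a # v))"
    using mc_base[where R="braid_rel n" and l="[Sig a, Sig b]" and r="[Sig b, Sig a]", OF rel, of "Sigs v"] by (simp add: Sigs_def)
  also have "mon_cong (braid_rel n) (Sig b # Sigs (a # v)) (Sigs (b # u'))"
    using mc_Cons[OF mc_sym[OF c2]] by (simp add: Sigs_def)
  finally show ?thesis .
qed

lemma mats_adj:
  assumes IH: "IHM n (length (a # u))" and r: "red n (a # u)" and r': "red n ((a+1) # u')"
    and eq: "perm_of (a # u) = perm_of ((a+1) # u')"
  shows "mon_cong (braid_rel n) (Sigs (a # u)) (Sigs ((a+1) # u'))"
proof -
  define g where "g = perm_of (a # u)"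
  have hu: "\<And>x. perm_of u x = g (sw a x)" by (simp add: g_def)
  have hu': "\<And>x. perm_of u' x = g (sw (a+1) x)" unfolding g_def eq by simp
  obtain ru: "red n u" and a: "1 \<le> a" "a < n" and asc: "perm_of u a < perm_of u (a+1)" using red_uncons[OF r] by blast
  obtain ru': "red n u'" and b: "1 \<le> a+1" "a+1 < n" and asc': "perm_of u' (a+1) < perm_of u' (a+1+1)" using red_uncons[OF r'] by blast
  have ga: "g (a+1) < g a" using asc hu by (simp add: sw_def)
  have gb: "g (a+2) < g (a+1)" using asc' hu' by (simp add: sw_def)
  have "perm_of (a # (a+1) # u) permutes {1..n}" using r b by (intro perm_of_permutes) (auto simp: red_def)
  then obtain v where rv: "red n v" and pv: "perm_of v = perm_of (a # (a+1) # u)" using red_exists by blast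
  have kv: "\<And>x. perm_of v x = g (sw a (sw (a+1) (sw a x)))" using pv hu by simp
  have r1: "red n (a # v)" using ga gb by (intro red_cons[OF rv a]) (auto simp: kv sw_def)
  have r2: "red n ((a+1) # a # v)" using ga gb by (intro red_cons[OF r1 b]) (auto simp: kv sw_def)
  have r3: "red n ((a+1) # v)" using ga gb by (intro red_cons[OF rv b]) (auto simp: kv sw_def)
  have r4: "red n (a # (a+1) # v)" using ga gb by (intro red_cons[OF r3 a]) (auto simp: kv sw_def)
  have p2: "perm_of ((a+1) # a # v) = perm_of u" by (rule ext) (simp add: kv hu)
  have p4: "perm_of (a # (a+1) # v) = perm_of u'" by (rule ext) (simp add: kv hu' sw_braid5)
  have lu: "length u' = length u" using red_len_eq[OF r r' eq] by simp
  have c1: "mon_cong (braid_rel n) (Sigs u) (Sigs ((a+1) # a # v))"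
    using IH ru r2 p2 by (simp add: IHM_def)
  have c2: "mon_cong (braid_rel n) (Sigs u') (Sigs (a # (a+1) # v))"
    using IH ru' r4 p4 lu by (simp add: IHM_def)
  have rel: "braid_rel n [Sig a, Sig (a+1), Sig a] [Sig (a+1), Sig a, Sig (a+1)]" using a b by (intro braid_rel.sss) auto
  have "mon_cong (braid_rel n) (Sigs (a # u)) (Sig a # Sigs ((a+1) # a # v))"
    using mc_Cons[OF c1] by (simp add: Sigs_def)
  also have "mon_cong (braid_rel n) (Sig a # Sigs ((a+1) # a # v)) (Sig (a+1) # Sigs (a # (a+1) # v))"
    using mc_base[where R="braid_rel n" and l="[Sig a, Sig (a+1), Sig a]" and r="[Sig (a+1), Sig a, Sig (a+1)]", OF rel, of "Sigs v"]
    by (simp add: Sigs_def)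
  also have "mon_cong (braid_rel n) (Sig (a+1) # Sigs (a # (a+1) # v)) (Sigs ((a+1) # u'))"
    using mc_Cons[OF mc_sym[OF c2]] by (simp add: Sigs_def)
  finally show ?thesis .
qed

lemma matsumoto:
  "red n w \<Longrightarrow> red n w' \<Longrightarrow> perm_of w = perm_of w' \<Longrightarrow> mon_cong (braid_rel n) (Sigs w) (Sigs w')"
proof (induction "length w" arbitrary: w w' rule: less_induct)
  case less
  have IH: "IHM n (length w)" unfolding IHM_def using less.hyps by blast
  have len: "length w = length w'" using red_len_eq[OF less.prems] .
  show ?case
  proof (cases w)
    case Nil then show ?thesis using len by (simp add: mc_refl)
  next
    case (Cons a u)
    then obtain b u' where w': "w' = b # u'" using len by (cases w') auto
    have r: "red n (a # u)" and r': "red n (b # u')" and eq: "perm_of (a # u) = perm_of (b # u')"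
      using less.prems Cons w' by auto
    have IH': "IHM n (length (a # u))" using IH Cons by simp
    have IH'': "IHM n (length (b # u'))" using IH len w' by simp
    consider "a = b" | "a + 1 < b \<or> b + 1 < a" | "b = a + 1" | "a = b + 1" by linarith
    then show ?thesis
    proof cases
      case 1
      obtain ru: "red n u" using red_uncons[OF r] by blast
      obtain ru': "red n u'" using red_uncons[OF r'] by blast
      have "perm_of u = perm_of u'"
      proof
        fix x show "perm_of u x = perm_of u' x"
          using fun_cong[OF eq, of "sw a x"] 1 by simp
      qed
      then have "mon_cong (braid_rel n) (Sigs u) (Sigs u')" using IH ru ru' Cons by (simp add: IHM_def)
      then show ?thesis using mc_Cons 1 Cons w' by (simp add: Sigs_def)
    next
      case 2 then show ?thesis using mats_far[OF IH' r r' eq] Cons w' by simp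
    next
      case 3 then show ?thesis using mats_adj[OF IH' r _ eq[unfolded 3]] r' Cons w' by simp
    next
      case 4
      have "mon_cong (braid_rel n) (Sigs (b # u')) (Sigs (a # u))"
        using mats_adj[OF IH'' r' _ eq[symmetric, unfolded 4]] r 4 by simp
      then show ?thesis using mc_sym Cons w' by blast
    qed
  qed
qed



lemma alpha_filter: "alpha_t x = filter (\<lambda>(c,v). list_all is_Sig v) x"
  by (induction x) (auto simp: alpha_t_def)

lemma fs_mult_Nil: "fs_mult [] y = []" by (simp add: fs_mult_def)
lemma fs_mult_Cons: "fs_mult ((c,v)#x) y = map (\<lambda>(d,w). (c*d, v@w)) y @ fs_mult x y"
  by (simp add: fs_mult_def)

lemma filt_map: "filter (\<lambda>(c,v). list_all is_Sig v) (map (\<lambda>(d,w). (c*d, v@w)) y)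
   = (if list_all is_Sig v then map (\<lambda>(d,w). (c*d, v@w)) (filter (\<lambda>(c,v). list_all is_Sig v) y) else [])"
  by (induction y) auto

lemma alpha_mult: "alpha_t (fs_mult x y) = fs_mult (alpha_t x) (alpha_t y)"
  unfolding alpha_filter
proof (induction x)
  case Nil then show ?case by (simp add: fs_mult_Nil)
next
  case (Cons a x)
  obtain c v where a: "a = (c,v)" by force
  show ?case using Cons by (simp add: a fs_mult_Cons filt_map)
qed

lemma alpha_prod: "alpha_t (fs_prod xs) = fs_prod (map alpha_t xs)"
  unfolding fs_prod_def
proof (induction xs)
  case Nil then show ?case by (simp add: alpha_filter)
next
  case (Cons a xs) then show ?case by (simp add: alpha_mult)
qed

lemma list_all_Sig[simp]: "list_all is_Sig (map Sig xs)" by (induction xs) auto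

lemma alpha_Qf: "1 \<le> t \<Longrightarrow> t \<le> k \<Longrightarrow> alpha_t (Q_factor k t t' :: ('k::comm_ring_1, gen list) fsum) = [(1, Sigs [t..<k+1])]"
proof -
  assume a: "1 \<le> t" "t \<le> k"
  then have "[t..<k+1] = t # [t+1..<k+1]" by (simp only: upt_conv_Cons Suc_eq_plus1)
  then show ?thesis by (simp del: upt.simps add: Q_factor_def alpha_t_def fs_mult_def Sigs_def)
qed

lemma prod_singles: "fs_prod (map (\<lambda>k. [(1::'k::comm_ring_1, f k)]) ks) = [(1, concat (map f ks))]"
  unfolding fs_prod_def by (induction ks) (auto simp: fs_mult_def)

lemma map_alpha_Q:
  "(\<forall>k\<in>set xs. t k \<le> k) \<Longrightarrow>
   map alpha_t [Q_factor k (t k) (t (k+1)). k \<leftarrow> xs, t k \<noteq> 0]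
     = map (\<lambda>k. [(1::'k::comm_ring_1, Sigs (bubble_word k (t k)))]) (filter (\<lambda>k. t k \<noteq> 0) xs)"
  by (induction xs) (auto simp: alpha_Qf bubble_word_def)

lemma concat_filter_bw:
  "concat (map (\<lambda>k. Sigs (bubble_word k (t k))) (filter (\<lambda>k. t k \<noteq> 0) xs))
     = Sigs (concat (map (\<lambda>k. bubble_word k (t k)) xs))"
  by (induction xs) (auto simp: Sigs_def bubble_word_def)

lemma bubble_t_eq: "bubble_t n s = (THE t. supp n t \<and> s = perm_of (Wd n t))"
  by (simp add: bubble_t_def supp_def Wd_def)

lemma alpha_Q:
  assumes "supp (p+q) t" "bubble_t (p+q) s = t"
  shows "alpha_t (Q p q s :: ('k::comm_ring_1, gen list) fsum) = [(1, Sigs (Wd (p+q) t))]"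
proof -
  have b: "\<forall>k\<in>set (rev [1..<p+q]). t k \<le> k" using assms(1) by (auto simp: supp_def)
  show ?thesis
    unfolding Q_def Let_def assms(2) alpha_prod map_alpha_Q[OF b] map_map[symmetric]
    by (simp only: prod_singles concat_filter_bw Wd_def map_map[symmetric])
qed

lemma fs_eq_single:
  assumes "\<And>w. E a w \<longleftrightarrow> E b w"
  shows "fs_eq E [(c::'k::comm_ring_1, a)] [(c, b)]"
  using assms by (simp add: fs_eq_def)

theorem lemma4:
  fixes p q :: nat and s :: "nat \<Rightarrow> nat"
  assumes "1 \<le> p" and "1 \<le> q" and "s \<in> shuffles p q"
  shows "fs_eq (mon_cong (braid_rel (p + q)))
           (alpha_t (Q p q s :: ('k::field, gen list) fsum)) (T (p + q) s)
       \<and> fs_eq (=) (beta_t (T (p + q) s :: ('k, gen list) fsum)) [(1, s)]"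
proof -
  define n where "n = p + q"
  have sp: "s permutes {1..n}" using assms(3) by (simp add: shuffles_def Sym_def n_def)
  obtain t where t: "supp n t" "s = perm_of (Wd n t)" using bubble_exists[OF sp] by blast
  have bt: "bubble_t n s = t"
    unfolding bubble_t_eq
    by (rule the_equality) (use t bubble_unique in auto)
  define w0 where "w0 = Wd n t"
  have r0: "red n w0" unfolding w0_def using red_W[OF t(1)] .
  have pw0: "perm_of w0 = s" using t(2) by (simp add: w0_def)
  have s0: "set w0 \<subseteq> {1..n-1} \<and> perm_of w0 = s" using r0 pw0 by (simp add: red_def)
  have "\<exists>w. reduced_expr n s w"
  proof -
    have "set w0 \<subseteq> {1..n-1} \<and> perm_of w0 = s" using r0 pw0 by (simp add: red_def)
    from ex_has_least_nat[of "\<lambda>w. set w \<subseteq> {1..n-1} \<and> perm_of w = s", OF this, of length]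
    show ?thesis unfolding reduced_expr_def by blast
  qed
  define wT where "wT = (SOME w. reduced_expr n s w)"
  have rT: "reduced_expr n s wT" unfolding wT_def using \<open>\<exists>w. reduced_expr n s w\<close> by (rule someI_ex)
  have wT: "set wT \<subseteq> {1..n-1}" "perm_of wT = s" "length wT \<le> length w0"
    using rT s0 unfolding reduced_expr_def by blast+
  have "ninv n (perm_of wT) \<le> length wT" using ninv_le_length[OF wT(1)] .
  then have rwT: "red n wT" using wT r0 pw0 by (simp add: red_def)
  have mc: "mon_cong (braid_rel n) (Sigs w0) (Sigs wT)"
    using matsumoto[OF r0 rwT] pw0 wT(2) by simp
  have T: "T n s = [(1, Sigs wT)]" by (simp add: T_def wT_def)
  have A: "alpha_t (Q p q s :: ('k::field, gen list) fsum) = [(1, Sigs w0)]"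
    using alpha_Q[of p q t s] t(1) bt by (simp add: n_def w0_def)
  have c1: "fs_eq (mon_cong (braid_rel n)) (alpha_t (Q p q s :: ('k::field, gen list) fsum)) (T n s)"
    unfolding A T
    by (rule fs_eq_single) (meson mc mc_sym mc_trans)
  have "beta_t (T n s :: ('k, gen list) fsum) = [(1, s)]"
    unfolding T beta_t_def Sigs_def using wT(2) by (simp add: o_def)
  then have c2: "fs_eq (=) (beta_t (T n s :: ('k, gen list) fsum)) [(1, s)]"
    by (simp add: fs_eq_def)
  show ?thesis using c1 c2 by (simp add: n_def)
qed

end
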